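(* Let $n\in\mathbb N$, $q\in\mathbb N_0$ and $\beta_1,\dots,\beta_q\in\mathbb R$. Then there exists $N\in\mathbb N$ such that \[\max_{m\in\{1,\dots,N\}}\Big\|a\,(\sin(m\alpha_1),\dots,\sin(m\alpha_n))+\sum_{k=1}^q\sin(m\beta_k)B_k+mS\Big\|\ge\|S\|\] for all $a\in\mathbb C^n$ (a column vector), $\alpha_1,\dots,\alpha_n\in\mathbb R$, $B_1,\dots,B_q\in\mathbb C^{n\times n}$ and $S\in\mathrm{Skew}(n,\mathbb C)$.
   Context: $\|\cdot\|$ is the Frobenius norm on $\mathbb C^{n\times n}$; $a\,(\sin(m\alpha_1),\dots,\sin(m\alpha_n))$ is the $n\times n$ matrix obtained as the product of the column vector $a$ with the given row vector; $\mathrm{Skew}(n,\mathbb C)$ is the set of complex $n\times n$ matrices $S$ with $S^T=-S$. For $q=0$ the sum is empty. *)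

theory Defs
  imports "HOL-Analysis.Analysis"
begin

text \<open>Frobenius norm: for matrices of type complex^'n^'n, the library norm is the
  Euclidean (L2) norm of the vector of all entries, i.e. the Frobenius norm.\<close>

definition frob :: "complex^'n^'n \<Rightarrow> real" where
  "frob M = sqrt (\<Sum>i\<in>UNIV. \<Sum>j\<in>UNIV. (cmod (M $ i $ j))\<^sup>2)"

definition skew :: "complex^'n^'n \<Rightarrow> bool" where
  "skew S \<longleftrightarrow> transpose S = - S"

definition outer_sin :: "complex^'n \<Rightarrow> (real^'n) \<Rightarrow> nat \<Rightarrow> complex^'n^'n" where
  "outer_sin a \<alpha> m = (\<chi> i j. a $ i * complex_of_real (sin (real m * \<alpha> $ j)))"

end

theory Submission imports Defs begin

fun Dit :: "(nat \<Rightarrow> real) \<Rightarrow> nat \<Rightarrow> (int \<Rightarrow> 'v::real_normed_vector) \<Rightarrow> int \<Rightarrow> 'v" where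
  "Dit g 0 f = f"
| "Dit g (Suc k) f = (\<lambda>m. Dit g k f (m+1) + Dit g k f (m-1) - (2 * g (Suc k)) *\<^sub>R Dit g k f m)"

lemma Dit_bound:
  assumes g: "\<And>i. \<bar>g i\<bar> \<le> 1"
  shows "(\<And>j. \<bar>j - m\<bar> \<le> int k \<Longrightarrow> norm (f j) \<le> L) \<Longrightarrow> norm (Dit g k f m) \<le> 4^k * L"
proof (induction k arbitrary: m)
  case 0
  then show ?case by simp
next
  case (Suc k)
  have a: "norm (Dit g k f (m+1)) \<le> 4^k * L" by (rule Suc.IH) (rule Suc.prems, auto)
  have b: "norm (Dit g k f (m-1)) \<le> 4^k * L" by (rule Suc.IH) (rule Suc.prems, auto)
  have c: "norm (Dit g k f m) \<le> 4^k * L" by (rule Suc.IH) (rule Suc.prems, auto)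
  have "norm ((2 * g (Suc k)) *\<^sub>R Dit g k f m) \<le> 2 * (4^k * L)"
  proof -
    have "norm ((2 * g (Suc k)) *\<^sub>R Dit g k f m) = \<bar>2 * g (Suc k)\<bar> * norm (Dit g k f m)" by simp
    also have "\<dots> \<le> 2 * (4^k * L)"
      using g[of "Suc k"] c by (intro mult_mono) (auto simp: abs_mult)
    finally show ?thesis .
  qed
  then have "norm (Dit g (Suc k) f m) \<le> 4^k*L + 4^k*L + 2*(4^k*L)"
  proof -
    have "norm (Dit g (Suc k) f m) \<le> norm (Dit g k f (m+1) + Dit g k f (m-1)) + norm ((2 * g (Suc k)) *\<^sub>R Dit g k f m)"
      by (simp only: Dit.simps) (rule norm_triangle_ineq4)
    also have "\<dots> \<le> norm (Dit g k f (m+1)) + norm (Dit g k f (m-1)) + norm ((2 * g (Suc k)) *\<^sub>R Dit g k f m)"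
      using norm_triangle_ineq by simp
    finally show ?thesis using a b \<open>norm ((2 * g (Suc k)) *\<^sub>R Dit g k f m) \<le> 2 * (4^k * L)\<close> by linarith
  qed
  then show ?case by (simp add: algebra_simps)
qed

lemma Dit_add: "Dit g k (\<lambda>m. f m + h m) = (\<lambda>m. Dit g k f m + Dit g k h m)"
  by (induction k) (auto simp: algebra_simps)

lemma Dit_zero: "Dit g k (\<lambda>m. 0) = (\<lambda>m. 0)"
  by (induction k) auto

lemma Dit_sum: "finite A \<Longrightarrow> Dit g k (\<lambda>m. \<Sum>x\<in>A. F x m) m = (\<Sum>x\<in>A. Dit g k (F x) m)"
proof (induction A rule: finite_induct)
  case empty
  then show ?case by (simp add: Dit_zero)
next
  case (insert x F)
  then show ?case by (simp add: Dit_add)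
qed

lemma Dit_eigen:
  assumes "\<And>m. \<phi> (m+1) + \<phi> (m-1) = 2 * c * \<phi> m"
  shows "Dit g k (\<lambda>m. \<phi> m *\<^sub>R V) = (\<lambda>m. ((\<Prod>i\<in>{1..k}. (2*c - 2*g i)) * \<phi> m) *\<^sub>R V)"
proof (induction k)
  case 0
  then show ?case by simp
next
  case (Suc k)
  let ?P = "\<Prod>i\<in>{1..k}. (2*c - 2*g i)"
  have "\<And>m. ?P * \<phi> (m+1) + ?P * \<phi> (m-1) - 2 * g (Suc k) * (?P * \<phi> m)
        = ?P * (2*c - 2*g (Suc k)) * \<phi> m"
  proof -
    fix m
    have "?P * \<phi> (m+1) + ?P * \<phi> (m-1) = ?P * (2 * c * \<phi> m)" using assms[of m] by (simp add: distrib_left[symmetric])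
    then show "?P * \<phi> (m+1) + ?P * \<phi> (m-1) - 2 * g (Suc k) * (?P * \<phi> m)
        = ?P * (2*c - 2*g (Suc k)) * \<phi> m" by (simp add: algebra_simps)
  qed
  moreover have "(\<Prod>i\<in>{1..Suc k}. (2*c - 2*g i)) = ?P * (2*c - 2*g (Suc k))"
    by (simp add: prod.nat_ivl_Suc')
  ultimately show ?case unfolding Dit.simps Suc
    by (simp add: fun_eq_iff scaleR_add_left[symmetric] scaleR_diff_left[symmetric] del: scaleR_add_left scaleR_diff_left)
qed

lemma Dit_nth: "Dit g k (\<lambda>m. f m $ i) m = Dit g k f m $ i"
  by (induction k arbitrary: m) auto

lemma frob_norm: "frob M = norm M"
proof -
  have "norm M = sqrt (\<Sum>i\<in>UNIV. (norm (M $ i))\<^sup>2)" by (simp add: norm_vec_def L2_set_def)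
  also have "\<dots> = frob M" unfolding frob_def
    by (simp add: norm_vec_def L2_set_def sum_nonneg)
  finally show ?thesis by simp
qed

lemma norm_l1_gen: "norm (x::'a::real_normed_vector^'n) \<le> (\<Sum>i\<in>UNIV. norm (x$i))"
  by (simp add: norm_vec_def L2_set_le_sum)

lemma entry_le: "norm ((X::'a::real_normed_vector^'n^'m)$i$j) \<le> norm X"
proof -
  have "norm (X$i$j) \<le> norm (X$i)" by (rule Finite_Cartesian_Product.norm_nth_le)
  also have "\<dots> \<le> norm X" by (rule Finite_Cartesian_Product.norm_nth_le)
  finally show ?thesis .
qed

lemma entry:
  fixes T :: "complex^'n^'n" and a :: "complex^'n" and w :: "'n \<Rightarrow> real"
  assumes sk: "transpose T = -T"
  shows "cmod (T$i$j) \<le> 2 * norm (T + (\<chi> i j. a$i * of_real (w j)))"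
proof -
  define X where "X = T + (\<chi> i j. a$i * of_real (w j))"
  have tr: "\<And>i j. T$j$i = - T$i$j" proof -
    fix i j
    have "transpose T $ i $ j = (-T) $ i $ j" using sk by simp
    then show "T$j$i = - T$i$j" by (simp add: transpose_def)
  qed
  have d: "\<And>i. T$i$i = 0" proof -
    fix i
    have "T$i$i = - T$i$i" by (rule tr)
    then show "T$i$i = 0" by simp
  qed
  have le: "\<And>i j. cmod (X$i$j) \<le> norm X" by (rule entry_le)
  define t where "t = T$i$j"
  have x: "X$i$i = a$i * of_real (w i)" using d by (simp add: X_def)
  have y: "X$i$j = t + a$i * of_real (w j)" by (simp add: X_def t_def)
  have z: "X$j$i = - t + a$j * of_real (w i)" using tr[of i j] by (simp add: X_def t_def)
  have v: "X$j$j = a$j * of_real (w j)" using d by (simp add: X_def)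
  have e1: "of_real (w j) * X$i$i - of_real (w i) * X$i$j = - t * of_real (w i)"
    unfolding x y by (simp add: algebra_simps)
  have e2: "of_real (w j) * X$j$i - of_real (w i) * X$j$j = - t * of_real (w j)"
    unfolding z v by (simp add: algebra_simps)
  have "cmod t \<le> 2 * norm X"
  proof (cases "\<bar>w j\<bar> \<le> \<bar>w i\<bar>")
    case True
    show ?thesis
    proof (cases "w i = 0")
      case True
      then have "w j = 0" using \<open>\<bar>w j\<bar> \<le> \<bar>w i\<bar>\<close> by simp
      then have "t = X$i$j" using y by simp
      then show ?thesis using le[of i j] norm_ge_zero[of X] by (smt (verit))
    next
      case False
      have "cmod t * \<bar>w i\<bar> = cmod (of_real (w j) * X$i$i - of_real (w i) * X$i$j)"
        using e1 by (simp add: norm_mult)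
      also have "\<dots> \<le> \<bar>w j\<bar> * cmod (X$i$i) + \<bar>w i\<bar> * cmod (X$i$j)"
        by (rule order_trans[OF norm_triangle_ineq4]) (simp add: norm_mult)
      also have "\<dots> \<le> \<bar>w i\<bar> * norm X + \<bar>w i\<bar> * norm X"
        using True le[of i i] le[of i j] by (intro add_mono mult_mono) auto
      finally have "cmod t * \<bar>w i\<bar> \<le> (2 * norm X) * \<bar>w i\<bar>" by simp
      then show ?thesis using False by simp
    qed
  next
    case False
    then have "w j \<noteq> 0" by auto
    have "cmod t * \<bar>w j\<bar> = cmod (of_real (w j) * X$j$i - of_real (w i) * X$j$j)"
      using e2 by (simp add: norm_mult)
    also have "\<dots> \<le> \<bar>w j\<bar> * cmod (X$j$i) + \<bar>w i\<bar> * cmod (X$j$j)"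
      by (rule order_trans[OF norm_triangle_ineq4]) (simp add: norm_mult)
    also have "\<dots> \<le> \<bar>w j\<bar> * norm X + \<bar>w j\<bar> * norm X"
      using False le[of j i] le[of j j] by (intro add_mono mult_mono) auto
    finally have "cmod t * \<bar>w j\<bar> \<le> (2 * norm X) * \<bar>w j\<bar>" by simp
    then show ?thesis using \<open>w j \<noteq> 0\<close> by simp
  qed
  then show ?thesis by (simp add: X_def t_def)
qed

lemma skew_bound:
  fixes T :: "complex^'n^'n" and a :: "complex^'n" and w :: "'n \<Rightarrow> real"
  assumes sk: "transpose T = -T"
  shows "norm T \<le> 2 * real CARD('n) ^ 2 * norm (T + (\<chi> i j. a$i * of_real (w j)))"
proof -
  let ?X = "T + (\<chi> i j. a$i * of_real (w j))"
  have "norm T \<le> (\<Sum>i\<in>UNIV. norm (T$i))" by (rule norm_l1_gen)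
  also have "\<dots> \<le> (\<Sum>i\<in>(UNIV::'n set). \<Sum>j\<in>(UNIV::'n set). 2 * norm ?X)"
    by (intro sum_mono order_trans[OF norm_l1_gen] entry[OF sk])
  also have "\<dots> = 2 * real CARD('n) ^ 2 * norm ?X" by (simp add: power2_eq_square)
  finally show ?thesis .
qed

lemma sin_rec: "sin ((real_of_int m + 1) * (\<theta>::real)) + sin ((real_of_int m - 1) * \<theta>) = 2 * cos \<theta> * sin (real_of_int m * \<theta>)"
proof -
  have "(real_of_int m + 1) * \<theta> = of_int m * \<theta> + \<theta>" "(real_of_int m - 1) * \<theta> = of_int m * \<theta> - \<theta>"
    by (simp_all add: algebra_simps)
  then show ?thesis by (simp add: sin_add sin_diff)
qed

lemma transpose_scaleR: "transpose (r *\<^sub>R (S::complex^'n^'n)) = r *\<^sub>R transpose S"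
  by (simp add: transpose_def vec_eq_iff)

theorem lemma3p19:
  fixes q :: nat and \<beta> :: "nat \<Rightarrow> real"
  shows "\<exists>N::nat. N \<ge> 1 \<and>
    (\<forall>(a::complex^'n) (\<alpha>::real^'n) (B::nat \<Rightarrow> complex^'n^'n) (S::complex^'n^'n).
       skew S \<longrightarrow>
       (MAX m\<in>{1..N}. frob (outer_sin a \<alpha> m
            + (\<Sum>k=1..q. sin (real m * \<beta> k) *\<^sub>R B k)
            + real m *\<^sub>R S)) \<ge> frob S)"
proof -
  define g where "g i = (if cos (\<beta> i) = 1 then 0 else cos (\<beta> i))" for i
  have g1: "\<bar>g i\<bar> \<le> 1" for i by (simp add: g_def abs_cos_le_one)
  have g2: "g i < 1" for i using cos_le_one[of "\<beta> i"] by (auto simp: g_def less_le)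
  define \<rho> where "\<rho> = (\<Prod>i\<in>{1..q}. (2 - 2 * g i))"
  have \<rho>pos: "\<rho> > 0" unfolding \<rho>_def by (rule prod_pos) (use g2 in \<open>auto simp: algebra_simps\<close>)
  define K where "K = 2 * real CARD('n) ^ 2 * 4 ^ q"
  have Kpos: "K > 0" by (simp add: K_def)
  define m0 :: nat where "m0 = q + 1 + nat \<lceil>K / \<rho>\<rceil>"
  have m0K: "K \<le> \<rho> * real m0"
  proof -
    have "K / \<rho> \<le> real m0" unfolding m0_def by linarith
    then show ?thesis using \<rho>pos by (simp add: divide_le_eq mult.commute)
  qed
  define N where "N = m0 + q"
  show ?thesis
  proof (intro exI[of _ N] conjI allI impI)
    show "N \<ge> 1" by (simp add: N_def m0_def)
    fix a :: "complex^'n" and \<alpha> :: "real^'n" and B :: "nat \<Rightarrow> complex^'n^'n" and S :: "complex^'n^'n"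
    assume sk: "skew S"
    define M where "M m = outer_sin a \<alpha> m + (\<Sum>k=1..q. sin (real m * \<beta> k) *\<^sub>R B k) + real m *\<^sub>R S" for m
    define L where "L = (MAX m\<in>{1..N}. frob (M m))"
    define Ou where "Ou = (\<lambda>j::int. (\<chi> i l. a$i * of_real (sin (of_int j * \<alpha>$l))) :: complex^'n^'n)"
    define Mi where "Mi = (\<lambda>j::int. Ou j + (\<Sum>k=1..q. sin (of_int j * \<beta> k) *\<^sub>R B k) + of_int j *\<^sub>R S)"
    have MiM: "Mi j = M (nat j)" if "j \<ge> 0" for j
      using that by (simp add: Mi_def M_def Ou_def outer_sin_def)
    have bnd: "norm (Mi j) \<le> L" if "\<bar>j - int m0\<bar> \<le> int q" for j
    proof -
      have "m0 \<ge> q + 1" by (simp add: m0_def)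
      then have j0: "j \<ge> 1" "j \<le> int m0 + int q" using that by linarith+
      then have j1: "nat j \<in> {1..N}" by (auto simp: N_def)
      have "norm (Mi j) = frob (M (nat j))" using j0 MiM[of j] by (simp add: frob_norm)
      also have "\<dots> \<le> L" unfolding L_def using j1 by (intro Max_ge) auto
      finally show ?thesis .
    qed
    have D1: "norm (Dit g q Mi (int m0)) \<le> 4^q * L"
      by (rule Dit_bound[OF g1 bnd])
    define w where "w l = (\<Prod>i\<in>{1..q}. (2 * cos (\<alpha>$l) - 2 * g i)) * sin (of_int (int m0) * \<alpha>$l)" for l
    have DO: "Dit g q Ou (int m0) = (\<chi> i l. a$i * of_real (w l))"
    proof (subst vec_eq_iff, intro allI, subst vec_eq_iff, intro allI)
      fix i l
      have "Dit g q Ou (int m0) $ i $ l = Dit g q (\<lambda>m. Ou m $ i $ l) (int m0)"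
        by (simp add: Dit_nth)
      also have "(\<lambda>m. Ou m $ i $ l) = (\<lambda>m. sin (of_int m * \<alpha>$l) *\<^sub>R a$i)"
        by (simp add: Ou_def fun_eq_iff scaleR_conv_of_real mult.commute)
      also have "Dit g q (\<lambda>m. sin (of_int m * \<alpha>$l) *\<^sub>R a$i) (int m0) = w l *\<^sub>R a$i"
        by (subst Dit_eigen[where c = "cos (\<alpha>$l)"]) (auto simp: sin_rec w_def)
      finally show "Dit g q Ou (int m0) $ i $ l = (\<chi> i l. a$i * of_real (w l)) $ i $ l"
        by (simp add: scaleR_conv_of_real mult.commute)
    qed
    have DB: "Dit g q (\<lambda>m. sin (of_int m * \<beta> k) *\<^sub>R B k) (int m0) = 0" if "k \<in> {1..q}" for k
    proof (cases "cos (\<beta> k) = 1")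
      case True
      then have "sin (\<beta> k) = 0" by (rule cos_one_sin_zero)
      then obtain z :: int where z: "\<beta> k = of_int z * pi" by (auto simp: sin_zero_iff_int2)
      have "sin (of_int m * \<beta> k) = 0" for m :: int
        unfolding z sin_zero_iff_int2 by (intro exI[of _ "m*z"]) simp
      then have "(\<lambda>m. sin (of_int m * \<beta> k) *\<^sub>R B k) = (\<lambda>m. 0)" by simp
      then show ?thesis by (simp add: Dit_zero)
    next
      case False
      have "(\<Prod>i\<in>{1..q}. (2 * cos (\<beta> k) - 2 * g i)) = 0"
        using that False by (intro prod_zero bexI[of _ k]) (auto simp: g_def)
      then show ?thesis
        by (subst Dit_eigen[where c = "cos (\<beta> k)"]) (auto simp: sin_rec)
    qed
    have DS: "Dit g q (\<lambda>m. of_int m *\<^sub>R S) (int m0) = (\<rho> * real m0) *\<^sub>R S"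
      by (subst Dit_eigen[where c = 1]) (auto simp: \<rho>_def)
    have Dall: "Dit g q Mi (int m0) = (\<chi> i l. a$i * of_real (w l)) + (\<rho> * real m0) *\<^sub>R S"
    proof -
      have "Dit g q Mi (int m0) = Dit g q Ou (int m0) + (\<Sum>k=1..q. Dit g q (\<lambda>m. sin (of_int m * \<beta> k) *\<^sub>R B k) (int m0))
           + Dit g q (\<lambda>m. of_int m *\<^sub>R S) (int m0)"
        unfolding Mi_def Dit_add by (simp add: Dit_sum)
      then show ?thesis using DO DB DS by simp
    qed
    have skT: "transpose ((\<rho> * real m0) *\<^sub>R S) = - ((\<rho> * real m0) *\<^sub>R S)"
      using sk by (simp add: skew_def transpose_scaleR)
    have "norm ((\<rho> * real m0) *\<^sub>R S) \<le> 2 * real CARD('n) ^ 2 * norm ((\<rho> * real m0) *\<^sub>R S + (\<chi> i l. a$i * of_real (w l)))"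
      by (rule skew_bound[OF skT])
    also have "\<dots> = 2 * real CARD('n) ^ 2 * norm (Dit g q Mi (int m0))"
      by (simp add: Dall add.commute)
    also have "\<dots> \<le> 2 * real CARD('n) ^ 2 * (4^q * L)"
      using D1 by (intro mult_left_mono) auto
    finally have "\<rho> * real m0 * norm S \<le> K * L" using \<rho>pos by (simp add: K_def mult.assoc)
    moreover have "K * norm S \<le> \<rho> * real m0 * norm S" using m0K by (intro mult_right_mono) auto
    ultimately have "K * norm S \<le> K * L" by linarith
    then have "norm S \<le> L" using Kpos by simp
    then show "frob S \<le> (MAX m\<in>{1..N}. frob (outer_sin a \<alpha> m
            + (\<Sum>k=1..q. sin (real m * \<beta> k) *\<^sub>R B k) + real m *\<^sub>R S))"
      by (simp add: frob_norm L_def M_def)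
  qed
qed

end
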